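(* Let $q\in\mathbb C^\times$ with $|q|\ne1$, and let $A_q$ be the algebra with vector-space basis $\{z^nt^k:n\in\mathbb Z,k\in\mathbb N\}$ and multiplication $z^mt^k\cdot z^nt^l=q^{kn}z^{m+n}t^{k+l}$, endowed with the strongest locally convex topology. Write $u=\sum_{k}u_k t^k$ with $u_k=\sum_n u_{k,n}z^n$ Laurent polynomials, and for $C\ge1$ let $\|u_k\|_C=\sum_n|u_{k,n}|C^{|n|}$. (1) If $|q|<1$ and $D\ge1$, $K\in\mathbb N$ satisfy $D|q|^K\ge1$, then $p_{D,K}(u)=\sum_{k=0}^K\|u_k\|_{D|q|^k}$ is a submultiplicative seminorm on $A_q$; conversely every submultiplicative seminorm on $A_q$ is dominated by a constant multiple of some such $p_{D,K}$. (2) If $|q|>1$ and $D\ge1$, $K\in\mathbb N$ satisfy $D/|q|^K\ge1$, then $p_{D,K}(u)=\sum_{k=0}^K\|u_k\|_{D/|q|^k}$ is a submultiplicative seminorm on $A_q$; conversely every submultiplicative seminorm on $A_q$ is dominated by a constant multiple of some such $p_{D,K}$.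
   Context: $A_q$ is the algebra $\mathcal R_q(\mathbb C^\times\ltimes\mathbb C)$ (quantum `$az+b$'), i.e. skew polynomials $\sum_k u_k t^k$ with Laurent-polynomial coefficients $u_k$ in $z$, where $t\cdot z=q\,z\cdot t$; equivalently $(u\cdot v)_k=\sum_{i=0}^k u_i\cdot\varphi^i(v_{k-i})$ with $\varphi(z^n)=q^nz^n$. A seminorm $p$ is submultiplicative if $p(uv)\le p(u)p(v)$. *)

theory Defs
  imports Complex_Main
begin

text \<open>Elements of A_q: u k n is the coefficient of z^n t^k; finitely supported.\<close>
definition Aq :: "(nat \<Rightarrow> int \<Rightarrow> complex) set" where
  "Aq = {u. finite {(k, n). u k n \<noteq> 0}}"

definition aq_add :: "(nat \<Rightarrow> int \<Rightarrow> complex) \<Rightarrow> (nat \<Rightarrow> int \<Rightarrow> complex) \<Rightarrow> (nat \<Rightarrow> int \<Rightarrow> complex)" where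
  "aq_add u v = (\<lambda>k n. u k n + v k n)"

definition aq_scale :: "complex \<Rightarrow> (nat \<Rightarrow> int \<Rightarrow> complex) \<Rightarrow> (nat \<Rightarrow> int \<Rightarrow> complex)" where
  "aq_scale c u = (\<lambda>k n. c * u k n)"

text \<open>Product determined by z^a t^i * z^b t^j = q^(i b) z^(a+b) t^(i+j).\<close>
definition aq_mult :: "complex \<Rightarrow> (nat \<Rightarrow> int \<Rightarrow> complex) \<Rightarrow> (nat \<Rightarrow> int \<Rightarrow> complex) \<Rightarrow> (nat \<Rightarrow> int \<Rightarrow> complex)" where
  "aq_mult q u v = (\<lambda>k n. \<Sum>i\<le>k. \<Sum>a\<in>{a. u i a \<noteq> 0}.
       u i a * v (k - i) (n - a) * q powi (int i * (n - a)))"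

definition submult_seminorm :: "complex \<Rightarrow> ((nat \<Rightarrow> int \<Rightarrow> complex) \<Rightarrow> real) \<Rightarrow> bool" where
  "submult_seminorm q p \<longleftrightarrow>
     (\<forall>u\<in>Aq. \<forall>v\<in>Aq. p (aq_add u v) \<le> p u + p v) \<and>
     (\<forall>u\<in>Aq. \<forall>c. p (aq_scale c u) = norm c * p u) \<and>
     (\<forall>u\<in>Aq. \<forall>v\<in>Aq. p (aq_mult q u v) \<le> p u * p v)"

definition lnorm :: "real \<Rightarrow> (int \<Rightarrow> complex) \<Rightarrow> real" where
  "lnorm C f = (\<Sum>n\<in>{n. f n \<noteq> 0}. norm (f n) * C ^ nat \<bar>n\<bar>)"

definition pDK_lt :: "complex \<Rightarrow> real \<Rightarrow> nat \<Rightarrow> (nat \<Rightarrow> int \<Rightarrow> complex) \<Rightarrow> real" where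
  "pDK_lt q D K u = (\<Sum>k\<le>K. lnorm (D * norm q ^ k) (u k))"

definition pDK_gt :: "complex \<Rightarrow> real \<Rightarrow> nat \<Rightarrow> (nat \<Rightarrow> int \<Rightarrow> complex) \<Rightarrow> real" where
  "pDK_gt q D K u = (\<Sum>k\<le>K. lnorm (D / norm q ^ k) (u k))"

end

theory Submission imports Defs begin

definition supp :: "(nat \<Rightarrow> int \<Rightarrow> complex) \<Rightarrow> (nat \<times> int) set" where
  "supp u = {(k, n). u k n \<noteq> 0}"

lemma Aq_supp: "u \<in> Aq \<longleftrightarrow> finite (supp u)"
  by (simp add: Aq_def supp_def)

definition wn :: "(nat \<Rightarrow> int \<Rightarrow> real) \<Rightarrow> (nat \<Rightarrow> int \<Rightarrow> complex) \<Rightarrow> real" where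
  "wn w u = (\<Sum>(k,n)\<in>supp u. norm (u k n) * w k n)"

definition mono1 :: "nat \<Rightarrow> int \<Rightarrow> nat \<Rightarrow> int \<Rightarrow> complex" where
  "mono1 k n = (\<lambda>i m. if i = k \<and> m = n then 1 else 0)"

lemma wn_super:
  assumes "finite S" "supp u \<subseteq> S"
  shows "wn w u = (\<Sum>(k,n)\<in>S. norm (u k n) * w k n)"
  unfolding wn_def
  by (rule sum.mono_neutral_left[OF assms]) (auto simp: supp_def)

lemma finite_row: "u \<in> Aq \<Longrightarrow> finite {n. u k n \<noteq> 0}"
proof -
  assume "u \<in> Aq"
  then have "finite (snd ` supp u)" by (simp add: Aq_supp)
  moreover have "{n. u k n \<noteq> 0} \<subseteq> snd ` supp u" by (force simp: supp_def)
  ultimately show ?thesis by (rule finite_subset[rotated])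
qed

lemma sum_lnorm_wn:
  assumes "u \<in> Aq"
  shows "(\<Sum>k\<le>K. lnorm (g k) (u k)) = wn (\<lambda>k n. if k \<le> K then g k ^ nat \<bar>n\<bar> else 0) u"
proof -
  have fin: "finite (supp u)" using assms by (simp add: Aq_supp)
  have "(\<Sum>k\<le>K. lnorm (g k) (u k)) = (\<Sum>(k,n)\<in>Sigma {..K} (\<lambda>k. {n. u k n \<noteq> 0}). norm (u k n) * g k ^ nat \<bar>n\<bar>)"
    unfolding lnorm_def by (subst sum.Sigma) (auto intro: finite_row[OF assms])
  also have "Sigma {..K} (\<lambda>k. {n. u k n \<noteq> 0}) = {x \<in> supp u. fst x \<le> K}"
    by (auto simp: supp_def)
  also have "(\<Sum>(k,n)\<in>{x \<in> supp u. fst x \<le> K}. norm (u k n) * g k ^ nat \<bar>n\<bar>)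
      = (\<Sum>x\<in>supp u. if fst x \<le> K then (case x of (k,n) \<Rightarrow> norm (u k n) * g k ^ nat \<bar>n\<bar>) else 0)"
    by (subst sum.inter_filter[OF fin]) (simp add: case_prod_unfold)
  also have "\<dots> = wn (\<lambda>k n. if k \<le> K then g k ^ nat \<bar>n\<bar> else 0) u"
    unfolding wn_def by (rule sum.cong) auto
  finally show ?thesis .
qed

lemma mult_formula:
  assumes u: "u \<in> Aq" and v: "v \<in> Aq"
  shows "aq_mult q u v k n = (\<Sum>(i,a)\<in>supp u. \<Sum>(j,b)\<in>supp v.
      if i + j = k \<and> a + b = n then u i a * v j b * q powi (int i * b) else 0)"
proof -
  have fu: "finite (supp u)" and fv: "finite (supp v)" using u v by (auto simp: Aq_supp)
  define F where "F i a = u i a * v (k-i) (n-a) * q powi (int i * (n-a))" for i a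
  have "aq_mult q u v k n = (\<Sum>(i,a)\<in>Sigma {..k} (\<lambda>i. {a. u i a \<noteq> 0}). F i a)"
    unfolding aq_mult_def F_def by (subst sum.Sigma) (auto intro: finite_row[OF u])
  also have "Sigma {..k} (\<lambda>i. {a. u i a \<noteq> 0}) = {x \<in> supp u. fst x \<le> k}"
    by (auto simp: supp_def)
  also have "(\<Sum>(i,a)\<in>{x \<in> supp u. fst x \<le> k}. F i a)
      = (\<Sum>x\<in>supp u. if fst x \<le> k then (case x of (i,a) \<Rightarrow> F i a) else 0)"
    by (subst sum.inter_filter[OF fu]) (simp add: case_prod_unfold)
  also have "\<dots> = (\<Sum>(i,a)\<in>supp u. \<Sum>(j,b)\<in>supp v.
      if i + j = k \<and> a + b = n then u i a * v j b * q powi (int i * b) else 0)"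
  proof (rule sum.cong[OF refl])
    fix x assume "x \<in> supp u"
    obtain i a where xia: "x = (i,a)" by (cases x)
    have "(\<Sum>(j,b)\<in>supp v. if i + j = k \<and> a + b = n then u i a * v j b * q powi (int i * b) else 0)
        = (\<Sum>y\<in>supp v. if i \<le> k then (if (k - i, n - a) = y then u i a * v (fst y) (snd y) * q powi (int i * snd y) else 0) else 0)"
      by (rule sum.cong[OF refl]) (auto split: if_splits)
    also have "\<dots> = (if i \<le> k then (\<Sum>y\<in>supp v. if (k - i, n - a) = y then u i a * v (fst y) (snd y) * q powi (int i * snd y) else 0) else 0)"
      by simp
    also have "\<dots> = (if i \<le> k then F i a else 0)"
      using fv by (subst sum.delta') (auto simp: F_def supp_def)
    finally show "(if fst x \<le> k then (case x of (i,a) \<Rightarrow> F i a) else 0) =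
      (case x of (i,a) \<Rightarrow> \<Sum>(j,b)\<in>supp v. if i + j = k \<and> a + b = n then u i a * v j b * q powi (int i * b) else 0)"
      by (simp add: xia)
  qed
  finally show ?thesis .
qed


lemma supp_add: "supp (aq_add u v) \<subseteq> supp u \<union> supp v"
  by (auto simp: supp_def aq_add_def)

lemma Aq_add: "u \<in> Aq \<Longrightarrow> v \<in> Aq \<Longrightarrow> aq_add u v \<in> Aq"
  unfolding Aq_supp using supp_add by (meson finite_UnI finite_subset)

lemma supp_scale: "supp (aq_scale c u) \<subseteq> supp u"
  by (auto simp: supp_def aq_scale_def)

lemma Aq_scale: "u \<in> Aq \<Longrightarrow> aq_scale c u \<in> Aq"
  unfolding Aq_supp using supp_scale by (meson finite_subset)

definition pset :: "(nat \<Rightarrow> int \<Rightarrow> complex) \<Rightarrow> (nat \<Rightarrow> int \<Rightarrow> complex) \<Rightarrow> (nat \<times> int) set" where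
  "pset u v = (\<lambda>((i,a),(j,b)). (i+j, a+b)) ` (supp u \<times> supp v)"

lemma supp_mult:
  assumes "u \<in> Aq" "v \<in> Aq"
  shows "supp (aq_mult q u v) \<subseteq> pset u v"
proof
  fix x assume x: "x \<in> supp (aq_mult q u v)"
  obtain k n where xk: "x = (k,n)" by (cases x)
  show "x \<in> pset u v"
  proof (rule ccontr)
    assume nx: "x \<notin> pset u v"
    have "aq_mult q u v k n = 0"
      unfolding mult_formula[OF assms]
      by (rule sum.neutral, clarify, rule sum.neutral, clarify)
         (use nx xk in \<open>force simp: pset_def\<close>)
    then show False using x xk by (simp add: supp_def)
  qed
qed

lemma finite_pset: "u \<in> Aq \<Longrightarrow> v \<in> Aq \<Longrightarrow> finite (pset u v)"
  by (simp add: pset_def Aq_supp)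

lemma Aq_mult: "u \<in> Aq \<Longrightarrow> v \<in> Aq \<Longrightarrow> aq_mult q u v \<in> Aq"
  using supp_mult finite_pset by (metis Aq_supp finite_subset)

lemma wn_add:
  assumes "u \<in> Aq" "v \<in> Aq" "\<forall>k n. w k n \<ge> 0"
  shows "wn w (aq_add u v) \<le> wn w u + wn w v"
proof -
  let ?S = "supp u \<union> supp v"
  have fS: "finite ?S" using assms by (simp add: Aq_supp)
  have "wn w (aq_add u v) = (\<Sum>(k,n)\<in>?S. norm (aq_add u v k n) * w k n)"
    by (rule wn_super[OF fS supp_add])
  also have "\<dots> \<le> (\<Sum>(k,n)\<in>?S. norm (u k n) * w k n + norm (v k n) * w k n)"
    apply (rule sum_mono)
    using assms(3) by (auto simp: aq_add_def distrib_right[symmetric] intro!: mult_right_mono norm_triangle_ineq)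
  also have "\<dots> = (\<Sum>(k,n)\<in>?S. norm (u k n) * w k n) + (\<Sum>(k,n)\<in>?S. norm (v k n) * w k n)"
    by (simp add: case_prod_unfold sum.distrib)
  also have "\<dots> = wn w u + wn w v"
    by (simp add: wn_super[OF fS, of u] wn_super[OF fS, of v])
  finally show ?thesis .
qed

lemma wn_scale:
  assumes "u \<in> Aq"
  shows "wn w (aq_scale c u) = norm c * wn w u"
proof -
  have fS: "finite (supp u)" using assms by (simp add: Aq_supp)
  have "wn w (aq_scale c u) = (\<Sum>(k,n)\<in>supp u. norm (aq_scale c u k n) * w k n)"
    by (rule wn_super[OF fS supp_scale])
  also have "\<dots> = norm c * wn w u"
    unfolding wn_def by (simp add: sum_distrib_left case_prod_unfold aq_scale_def norm_mult mult.assoc)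
  finally show ?thesis .
qed

lemma wn_mult:
  assumes u: "u \<in> Aq" and v: "v \<in> Aq" and w0: "\<forall>k n. w k n \<ge> 0"
    and W: "\<forall>i a j b. norm (q powi (int i * b)) * w (i+j) (a+b) \<le> w i a * w j b"
  shows "wn w (aq_mult q u v) \<le> wn w u * wn w v"
proof -
  let ?S = "pset u v"
  have fS: "finite ?S" using finite_pset[OF u v] .
  have fu: "finite (supp u)" and fv: "finite (supp v)" using u v by (auto simp: Aq_supp)
  define T where "T i a j b = u i a * v j b * q powi (int i * b)" for i a j b
  define G where "G z x y = (case x of (i,a) \<Rightarrow> case y of (j,b) \<Rightarrow>
      if z = (i+j, a+b) then norm (T i a j b) * w (i+j) (a+b) else 0)" for z :: "nat \<times> int" and x y
  have "wn w (aq_mult q u v) = (\<Sum>z\<in>?S. norm (aq_mult q u v (fst z) (snd z)) * w (fst z) (snd z))"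
    by (subst wn_super[OF fS supp_mult[OF u v]]) (simp add: case_prod_unfold)
  also have "\<dots> \<le> (\<Sum>z\<in>?S. \<Sum>x\<in>supp u. \<Sum>y\<in>supp v. G z x y)"
  proof (rule sum_mono)
    fix z assume "z \<in> ?S"
    obtain k n where z: "z = (k,n)" by (cases z)
    have "norm (aq_mult q u v k n) \<le> (\<Sum>x\<in>supp u. norm (\<Sum>y\<in>supp v. case x of (i,a) \<Rightarrow> case y of (j,b) \<Rightarrow>
         if i + j = k \<and> a + b = n then T i a j b else 0))"
      unfolding mult_formula[OF u v] T_def case_prod_unfold by (rule norm_sum)
    also have "\<dots> \<le> (\<Sum>x\<in>supp u. \<Sum>y\<in>supp v. norm (case x of (i,a) \<Rightarrow> case y of (j,b) \<Rightarrow>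
         if i + j = k \<and> a + b = n then T i a j b else 0))"
      by (rule sum_mono, rule norm_sum)
    finally have 1: "norm (aq_mult q u v k n) \<le> \<dots>" .
    have "norm (aq_mult q u v k n) * w k n \<le> (\<Sum>x\<in>supp u. \<Sum>y\<in>supp v. norm (case x of (i,a) \<Rightarrow> case y of (j,b) \<Rightarrow>
         if i + j = k \<and> a + b = n then T i a j b else 0)) * w k n"
      using 1 w0 by (simp add: mult_right_mono)
    also have "\<dots> = (\<Sum>x\<in>supp u. \<Sum>y\<in>supp v. G z x y)"
      unfolding sum_distrib_right
      by (rule sum.cong[OF refl], rule sum.cong[OF refl]) (auto simp: G_def z split: prod.splits)
    finally show "norm (aq_mult q u v (fst z) (snd z)) * w (fst z) (snd z) \<le> (\<Sum>x\<in>supp u. \<Sum>y\<in>supp v. G z x y)"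
      by (simp add: z)
  qed
  also have "\<dots> = (\<Sum>x\<in>supp u. \<Sum>y\<in>supp v. \<Sum>z\<in>?S. G z x y)"
    by (subst sum.swap) (subst sum.swap, simp)
  also have "\<dots> = (\<Sum>x\<in>supp u. \<Sum>y\<in>supp v. case x of (i,a) \<Rightarrow> case y of (j,b) \<Rightarrow> norm (T i a j b) * w (i+j) (a+b))"
  proof (rule sum.cong[OF refl], rule sum.cong[OF refl])
    fix x y assume xy: "x \<in> supp u" "y \<in> supp v"
    obtain i a j b where x: "x = (i,a)" and y: "y = (j,b)" by (cases x, cases y)
    have mem: "(i+j, a+b) \<in> ?S" using xy x y unfolding pset_def by force
    have "(\<Sum>z\<in>?S. G z x y) = (\<Sum>z\<in>?S. if (i+j,a+b) = z then norm (T i a j b) * w (i+j) (a+b) else 0)"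
      by (rule sum.cong[OF refl]) (auto simp: G_def x y)
    also have "\<dots> = norm (T i a j b) * w (i+j) (a+b)"
      using fS mem by (subst sum.delta') auto
    finally show "(\<Sum>z\<in>?S. G z x y) = (case x of (i,a) \<Rightarrow> case y of (j,b) \<Rightarrow> norm (T i a j b) * w (i+j) (a+b))"
      by (simp add: x y)
  qed
  also have "\<dots> \<le> (\<Sum>x\<in>supp u. \<Sum>y\<in>supp v. (case x of (i,a) \<Rightarrow> norm (u i a) * w i a) * (case y of (j,b) \<Rightarrow> norm (v j b) * w j b))"
  proof (rule sum_mono, rule sum_mono)
    fix x y :: "nat \<times> int"
    obtain i a j b where x: "x = (i,a)" and y: "y = (j,b)" by (cases x, cases y)
    have "norm (T i a j b) * w (i+j) (a+b) = norm (u i a) * norm (v j b) * (norm (q powi (int i * b)) * w (i+j) (a+b))"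
      by (simp add: T_def norm_mult)
    also have "\<dots> \<le> norm (u i a) * norm (v j b) * (w i a * w j b)"
      using W by (intro mult_left_mono) auto
    finally show "(case x of (i,a) \<Rightarrow> case y of (j,b) \<Rightarrow> norm (T i a j b) * w (i+j) (a+b))
        \<le> (case x of (i,a) \<Rightarrow> norm (u i a) * w i a) * (case y of (j,b) \<Rightarrow> norm (v j b) * w j b)"
      by (simp add: x y algebra_simps)
  qed
  also have "\<dots> = wn w u * wn w v"
    unfolding wn_def by (simp add: sum_product)
  finally show ?thesis .
qed

lemma supp_mono1: "supp (mono1 k n) = {(k,n)}"
  by (auto simp: supp_def mono1_def)

lemma Aq_mono1: "mono1 k n \<in> Aq"
  by (simp add: Aq_supp supp_mono1)

lemma mult_mono1: "aq_mult q (mono1 i a) (mono1 j b) = aq_scale (q powi (int i * b)) (mono1 (i+j) (a+b))"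
proof (rule ext, rule ext)
  fix k n
  show "aq_mult q (mono1 i a) (mono1 j b) k n = aq_scale (q powi (int i * b)) (mono1 (i+j) (a+b)) k n"
    unfolding mult_formula[OF Aq_mono1 Aq_mono1] supp_mono1
    by (auto simp: mono1_def aq_scale_def)
qed


lemma weight_lt:
  fixes x D :: real
  assumes x: "0 < x" "x < 1" and D: "1 \<le> D" "1 \<le> D * x ^ K"
  defines "w \<equiv> (\<lambda>k n. if k \<le> K then (D * x ^ k) ^ nat \<bar>n\<bar> else 0)"
  shows "x powi (int i * b) * w (i+j) (a+b) \<le> w i a * w j b"
proof (cases "i + j \<le> K")
  case False
  have "0 \<le> w i a" "0 \<le> w j b" unfolding w_def using x D by auto
  then show ?thesis using False by (simp add: w_def)
next
  case True
  define C where "C k = D * x ^ k" for k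
  have Cge: "1 \<le> C (i+j)"
  proof -
    have "x ^ K \<le> x ^ (i+j)" using True x by (simp add: power_decreasing)
    then have "D * x ^ K \<le> D * x ^ (i+j)" using D by (intro mult_left_mono) auto
    then show ?thesis using D unfolding C_def by linarith
  qed
  have Ci: "C (i+j) \<le> C i" "C (i+j) \<le> C j"
    using x D by (auto simp: C_def intro!: mult_left_mono power_decreasing)
  have 1: "C (i+j) ^ nat \<bar>a+b\<bar> \<le> C (i+j) ^ nat \<bar>a\<bar> * C (i+j) ^ nat \<bar>b\<bar>"
    unfolding power_add[symmetric] by (rule power_increasing) (use Cge in auto)
  have 2: "C (i+j) ^ nat \<bar>a\<bar> \<le> C i ^ nat \<bar>a\<bar>"
    by (rule power_mono) (use Ci Cge in auto)
  have 3: "x powi (int i * b) * C (i+j) ^ nat \<bar>b\<bar> \<le> C j ^ nat \<bar>b\<bar>"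
  proof (cases "b \<ge> 0")
    case True
    then obtain m where b: "b = int m" by (metis nonneg_int_cases)
    have "x powi (int i * b) * C (i+j) ^ nat \<bar>b\<bar> = (D * x ^ j * x ^ (2*i)) ^ m"
    proof -
      have e: "x powi (int i * int m) = x ^ (i*m)" by (simp flip: of_nat_mult)
      have "x ^ (i*m) * (D * x ^ (i+j)) ^ m = D ^ m * x ^ (i*m + (i+j)*m)"
        by (simp add: power_mult_distrib power_add power_mult[symmetric] algebra_simps)
      also have "i*m + (i+j)*m = (j + 2*i) * m" by (simp add: algebra_simps)
      also have "D ^ m * x ^ ((j + 2*i) * m) = (D * x ^ j * x ^ (2*i)) ^ m"
        by (simp add: power_mult_distrib power_add power_mult[symmetric] algebra_simps)
      finally show ?thesis unfolding b C_def e by simp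
    qed
    also have "\<dots> \<le> (D * x ^ j) ^ m"
    proof (rule power_mono)
      have "x ^ (2*i) \<le> 1" using x by (simp add: power_le_one)
      then show "D * x ^ j * x ^ (2*i) \<le> D * x ^ j"
        using x D by (simp add: mult_left_le)
    qed (use x D in simp)
    finally show ?thesis by (simp add: b C_def)
  next
    case False
    then obtain m where b: "b = - int m" by (metis nonpos_int_cases linear)
    have "x powi (int i * b) = inverse (x ^ (i*m))"
      by (simp add: b power_int_minus flip: of_nat_mult)
    then have "x powi (int i * b) * C (i+j) ^ nat \<bar>b\<bar> = C j ^ nat \<bar>b\<bar>"
      using x by (simp add: b C_def power_mult_distrib power_add power_mult[symmetric] field_simps mult.commute)
    then show ?thesis by simp
  qed
  have pos: "0 \<le> C (i+j) ^ nat \<bar>a\<bar>" "0 \<le> C (i+j) ^ nat \<bar>b\<bar>" "0 \<le> x powi (int i * b)"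
    using Cge x by auto
  have "x powi (int i * b) * C (i+j) ^ nat \<bar>a+b\<bar> \<le> x powi (int i * b) * (C (i+j) ^ nat \<bar>a\<bar> * C (i+j) ^ nat \<bar>b\<bar>)"
    using 1 pos by (simp add: mult_left_mono)
  also have "\<dots> = C (i+j) ^ nat \<bar>a\<bar> * (x powi (int i * b) * C (i+j) ^ nat \<bar>b\<bar>)" by simp
  also have "\<dots> \<le> C i ^ nat \<bar>a\<bar> * C j ^ nat \<bar>b\<bar>"
    by (rule mult_mono[OF 2 3]) (use pos Ci Cge in auto)
  finally show ?thesis using True by (simp add: w_def C_def)
qed


lemma conv_lt:
  fixes x :: real and P :: "nat \<Rightarrow> int \<Rightarrow> real"
  assumes x: "0 < x" "x < 1" and P0: "\<And>k n. P k n \<ge> 0"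
    and M: "\<And>i a j b. x powi (int i * b) * P (i+j) (a+b) \<le> P i a * P j b"
  shows "\<exists>D K C. D \<ge> 1 \<and> D * x ^ K \<ge> 1 \<and>
     (\<forall>k n. P k n \<le> C * (if k \<le> K then (D * x ^ k) ^ nat \<bar>n\<bar> else 0))"
proof -
  define A where "A = P 0 1"
  define B where "B = P 0 (-1)"
  define c where "c = P 1 0"
  define Z where "Z = P 0 0"
  have A0: "A \<ge> 0" and B0: "B \<ge> 0" and c0: "c \<ge> 0" and Z0: "Z \<ge> 0"
    using P0 by (auto simp: A_def B_def c_def Z_def)
  have xp: "\<And>n. 0 < x ^ n" using x by simp
  have step1: "P k 0 \<le> x ^ k * (A * B) * P k 0" for k
  proof -
    have h1: "P k 1 \<le> A * P k 0" using M[of 0 0 k 1] by (simp add: A_def)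
    have h2: "inverse (x ^ k) * P k 0 \<le> P k 1 * B"
      using M[of k "-1" 0 1] by (simp add: B_def power_int_minus)
    have "P k 0 = x ^ k * (inverse (x ^ k) * P k 0)" using x by (simp add: field_simps)
    also have "\<dots> \<le> x ^ k * (P k 1 * B)" using h2 xp[of k] by (intro mult_left_mono) auto
    also have "\<dots> \<le> x ^ k * (A * P k 0 * B)"
      using h1 xp[of k] B0 by (intro mult_left_mono mult_right_mono) auto
    finally show ?thesis by (simp add: algebra_simps)
  qed
  obtain K where K: "x ^ K < 1 / (A * B + 1)"
  proof -
    have "0 < A * B + 1" using A0 B0 by (simp add: add_nonneg_pos)
    then have "0 < 1 / (A * B + 1)" by simp
    then show ?thesis using real_arch_pow_inv[of "1 / (A * B + 1)" x] x that by blast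
  qed
  have KAB: "x ^ K * (A * B) < 1"
  proof -
    have "x ^ K * (A * B) \<le> x ^ K * (A * B + 1)" using xp[of K] by simp
    also have "\<dots> < 1"
    proof -
      have pos: "0 < A * B + 1" using A0 B0 by (simp add: add_nonneg_pos)
      show ?thesis using K pos by (simp add: less_divide_eq)
    qed
    finally show ?thesis .
  qed
  have PK: "P K 0 = 0"
  proof -
    have "(1 - x ^ K * (A * B)) * P K 0 \<le> 0" using step1[of K] by (simp add: algebra_simps)
    moreover have "1 - x ^ K * (A * B) > 0" using KAB by simp
    ultimately have "P K 0 \<le> 0" by (simp add: mult_le_0_iff)
    then show ?thesis using P0[of K 0] by simp
  qed
  have big: "P k n = 0" if "k \<ge> K" for k n
  proof -
    have "P k 0 \<le> P (k-K) 0 * P K 0" using M[of "k-K" 0 K 0] that by simp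
    then have "P k 0 = 0" using PK P0[of k 0] by simp
    then have "P k n \<le> 0" using M[of 0 0 k n] by simp
    then show ?thesis using P0[of k n] by simp
  qed
  have PA: "P 0 (int m) \<le> Z * A ^ m" for m
  proof (induction m)
    case 0 then show ?case by (simp add: Z_def)
  next
    case (Suc m)
    have "P 0 (int (Suc m)) \<le> P 0 (int m) * A" using M[of 0 1 0 "int m"] by (simp add: A_def add.commute)
    also have "\<dots> \<le> Z * A ^ m * A" using Suc A0 by (simp add: mult_right_mono)
    finally show ?case by (simp add: algebra_simps)
  qed
  have PB: "P 0 (- int m) \<le> Z * B ^ m" for m
  proof (induction m)
    case 0 then show ?case by (simp add: Z_def)
  next
    case (Suc m)
    have "P 0 (- int (Suc m)) \<le> P 0 (- int m) * B" using M[of 0 "-1" 0 "- int m"] by (simp add: B_def add.commute)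
    also have "\<dots> \<le> Z * B ^ m * B" using Suc B0 by (simp add: mult_right_mono)
    finally show ?case by (simp add: algebra_simps)
  qed
  have PC: "P k 0 \<le> Z * c ^ k" for k
  proof (induction k)
    case 0 then show ?case by (simp add: Z_def)
  next
    case (Suc k)
    have "P (Suc k) 0 \<le> P k 0 * c" using M[of k 0 1 0] by (simp add: c_def)
    also have "\<dots> \<le> Z * c ^ k * c" using Suc c0 by (simp add: mult_right_mono)
    finally show ?case by (simp add: algebra_simps)
  qed
  define E where "E = max 1 Z"
  define c' where "c' = max 1 c"
  define Cst where "Cst = E ^ 3 * c' ^ K"
  define D where "D = max (max 1 (A^2 * B)) (max B (inverse (x ^ K)))"
  have E1: "E \<ge> 1" and c1: "c' \<ge> 1" by (auto simp: E_def c'_def)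
  have D1: "D \<ge> 1" by (simp add: D_def)
  have DK: "D * x ^ K \<ge> 1"
  proof -
    have "inverse (x ^ K) \<le> D" by (simp add: D_def)
    then have "inverse (x ^ K) * x ^ K \<le> D * x ^ K" using xp[of K] by (intro mult_right_mono) auto
    moreover have "inverse (x ^ K) * x ^ K = 1" using x by simp
    ultimately show ?thesis by simp
  qed
  have PCK: "P k 0 \<le> E * c' ^ K" if "k \<le> K" for k
  proof -
    have "Z * c ^ k \<le> E * c' ^ k" using Z0 c0 by (intro mult_mono power_mono) (auto simp: E_def c'_def)
    also have "\<dots> \<le> E * c' ^ K" using E1 c1 that by (intro mult_left_mono power_increasing) auto
    finally show ?thesis using PC[of k] by linarith
  qed
  have bound: "P k n \<le> Cst * (D * x ^ k) ^ nat \<bar>n\<bar>" if kK: "k \<le> K" for k n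
  proof (cases "n \<ge> 0")
    case True
    then obtain m where n: "n = int m" by (metis nonneg_int_cases)
    have h1: "P k (2 * int m) \<le> P 0 (2 * int m) * P k 0" using M[of 0 0 k "2 * int m"] by simp
    have h2: "inverse (x ^ (k*m)) * P k (int m) \<le> P k (2 * int m) * P 0 (- int m)"
      using M[of k "- int m" 0 "2 * int m"] by (simp add: power_int_minus flip: of_nat_mult)
    have a2: "P 0 (2 * int m) \<le> E * A ^ (2*m)"
    proof -
      have "Z * A ^ (2*m) \<le> E * A ^ (2*m)" using A0 by (intro mult_right_mono) (auto simp: E_def)
      then show ?thesis using PA[of "2*m"] by simp
    qed
    have b2: "P 0 (- int m) \<le> E * B ^ m"
    proof -
      have "Z * B ^ m \<le> E * B ^ m" using B0 by (intro mult_right_mono) (auto simp: E_def)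
      then show ?thesis using PB[of m] by simp
    qed
    have "P k (int m) = x ^ (k*m) * (inverse (x ^ (k*m)) * P k (int m))" using x by (simp add: field_simps)
    also have "\<dots> \<le> x ^ (k*m) * (P k (2 * int m) * P 0 (- int m))"
      using h2 x by (intro mult_left_mono) auto
    also have "\<dots> \<le> x ^ (k*m) * ((E * A ^ (2*m) * (E * c' ^ K)) * (E * B ^ m))"
    proof (intro mult_left_mono mult_mono)
      show "P k (2 * int m) \<le> E * A ^ (2*m) * (E * c' ^ K)"
        using h1 a2 PCK[OF kK] P0 by (meson mult_mono order_trans)
    qed (use b2 P0 x E1 A0 c1 in auto)
    also have "\<dots> = Cst * (A ^ 2 * B * x ^ k) ^ m"
    proof -
      have e: "(A ^ 2 * B * x ^ k) ^ m = A ^ (2*m) * B ^ m * x ^ (k*m)"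
        by (simp add: power_mult_distrib power_mult)
      show ?thesis unfolding e Cst_def power3_eq_cube by (simp only: mult_ac)
    qed
    also have "\<dots> \<le> Cst * (D * x ^ k) ^ m"
      using E1 c1 A0 B0 x by (intro mult_left_mono power_mono mult_right_mono) (auto simp: Cst_def D_def)
    finally show ?thesis by (simp add: n)
  next
    case False
    then obtain m where n: "n = - int m" by (metis nonpos_int_cases linear)
    have h2: "inverse (x ^ (k*m)) * P k (- int m) \<le> P k 0 * P 0 (- int m)"
      using M[of k "- int m" 0 0] by (simp add: power_int_minus flip: of_nat_mult)
    have b2: "P 0 (- int m) \<le> E * B ^ m"
    proof -
      have "Z * B ^ m \<le> E * B ^ m" using B0 by (intro mult_right_mono) (auto simp: E_def)
      then show ?thesis using PB[of m] by simp
    qed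
    have "P k (- int m) = x ^ (k*m) * (inverse (x ^ (k*m)) * P k (- int m))" using x by (simp add: field_simps)
    also have "\<dots> \<le> x ^ (k*m) * (P k 0 * P 0 (- int m))"
      using h2 x by (intro mult_left_mono) auto
    also have "\<dots> \<le> x ^ (k*m) * ((E * c' ^ K) * (E * B ^ m))"
      by (intro mult_left_mono mult_mono) (use b2 P0 x E1 B0 c1 PCK[OF kK] in auto)
    also have "\<dots> \<le> x ^ (k*m) * (Cst * B ^ m)"
    proof -
      have nn: "0 \<le> E * c' ^ K * E" using E1 c1 by simp
      have "E * c' ^ K * E * 1 \<le> E * c' ^ K * E * E" by (rule mult_left_mono[OF E1 nn])
      moreover have "Cst = E * c' ^ K * E * E" by (simp add: Cst_def power3_eq_cube algebra_simps)
      ultimately have "E * c' ^ K * E \<le> Cst" by simp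
      then have "E * c' ^ K * E * B ^ m \<le> Cst * B ^ m" using B0 by (intro mult_right_mono) auto
      then show ?thesis using x by (intro mult_left_mono) (auto simp: algebra_simps)
    qed
    also have "\<dots> = Cst * (B * x ^ k) ^ m"
    proof -
      have e: "(B * x ^ k) ^ m = B ^ m * x ^ (k*m)"
        by (simp add: power_mult_distrib power_mult)
      show ?thesis unfolding e by (simp only: mult_ac)
    qed
    also have "\<dots> \<le> Cst * (D * x ^ k) ^ m"
      using E1 c1 B0 x by (intro mult_left_mono power_mono mult_right_mono) (auto simp: Cst_def D_def)
    finally show ?thesis by (simp add: n)
  qed
  show ?thesis
  proof (intro exI conjI allI)
    fix k n
    show "P k n \<le> Cst * (if k \<le> K then (D * x ^ k) ^ nat \<bar>n\<bar> else 0)"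
      using bound big[of k n] by (cases "k \<le> K") auto
  qed (use D1 DK in auto)
qed


lemma wn_submult:
  assumes w0: "\<forall>k n. w k n \<ge> 0"
    and W: "\<forall>i a j b. norm (q powi (int i * b)) * w (i+j) (a+b) \<le> w i a * w j b"
    and eq: "\<forall>u\<in>Aq. pp u = wn w u"
  shows "submult_seminorm q pp"
  unfolding submult_seminorm_def
  using eq wn_add[OF _ _ w0] wn_scale wn_mult[OF _ _ w0 W] Aq_add Aq_scale Aq_mult
  by simp

lemma sm_zero:
  assumes "submult_seminorm q p"
  shows "p (\<lambda>k n. 0) = 0"
proof -
  have z: "(\<lambda>k n. 0::complex) \<in> Aq" by (simp add: Aq_def)
  have "aq_scale 0 (\<lambda>k n. 0) = (\<lambda>k n. 0)" by (simp add: aq_scale_def)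
  then show ?thesis using assms z unfolding submult_seminorm_def by (metis norm_zero mult_zero_left)
qed

lemma sm_nonneg:
  assumes "submult_seminorm q p" "u \<in> Aq"
  shows "p u \<ge> 0"
proof -
  have "aq_add u (aq_scale (-1) u) = (\<lambda>k n. 0)" by (simp add: aq_add_def aq_scale_def)
  then have "p (\<lambda>k n. 0) \<le> p u + p (aq_scale (-1) u)"
    using assms Aq_scale unfolding submult_seminorm_def by metis
  moreover have "p (aq_scale (-1) u) = p u" using assms unfolding submult_seminorm_def by simp
  ultimately show ?thesis using sm_zero[OF assms(1)] by simp
qed

lemma sm_decomp_gen:
  assumes sm: "submult_seminorm q p" and S: "finite S"
  shows "\<forall>u\<in>Aq. supp u \<subseteq> S \<longrightarrow> p u \<le> (\<Sum>(k,n)\<in>S. norm (u k n) * p (mono1 k n))"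
  using S
proof (induction S rule: finite_induct)
  case empty
  show ?case
  proof (intro ballI impI)
    fix u assume "u \<in> Aq" "supp u \<subseteq> {}"
    then have "u = (\<lambda>k n. 0)" by (auto simp: supp_def)
    then show "p u \<le> (\<Sum>(k,n)\<in>{}. norm (u k n) * p (mono1 k n))" using sm_zero[OF sm] by simp
  qed
next
  case (insert x S)
  show ?case
  proof (intro ballI impI)
    fix u assume u: "u \<in> Aq" and su: "supp u \<subseteq> insert x S"
    obtain k0 n0 where x: "x = (k0, n0)" by (cases x)
    define u' where "u' = (\<lambda>k n. if (k,n) = x then 0 else u k n)"
    have su': "supp u' \<subseteq> supp u" by (auto simp: supp_def u'_def)
    have u': "u' \<in> Aq" using u su' by (meson Aq_supp finite_subset)
    have su'S: "supp u' \<subseteq> S" using su by (auto simp: supp_def u'_def)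
    have dec: "u = aq_add (aq_scale (u k0 n0) (mono1 k0 n0)) u'"
      by (intro ext) (auto simp: aq_add_def aq_scale_def mono1_def u'_def x)
    have "p u \<le> p (aq_scale (u k0 n0) (mono1 k0 n0)) + p u'"
      using sm u' Aq_scale[OF Aq_mono1] unfolding submult_seminorm_def by (metis dec)
    also have "p (aq_scale (u k0 n0) (mono1 k0 n0)) = norm (u k0 n0) * p (mono1 k0 n0)"
      using sm Aq_mono1 unfolding submult_seminorm_def by blast
    also have "p u' \<le> (\<Sum>(k,n)\<in>S. norm (u' k n) * p (mono1 k n))"
      using insert.IH u' su'S by blast
    also have "(\<Sum>(k,n)\<in>S. norm (u' k n) * p (mono1 k n)) = (\<Sum>(k,n)\<in>S. norm (u k n) * p (mono1 k n))"
      by (rule sum.cong[OF refl]) (use insert.hyps in \<open>auto simp: u'_def\<close>)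
    finally show "p u \<le> (\<Sum>(k,n)\<in>insert x S. norm (u k n) * p (mono1 k n))"
      using insert.hyps by (simp add: x)
  qed
qed

lemma sm_decomp:
  assumes sm: "submult_seminorm q p" and u: "u \<in> Aq"
  shows "p u \<le> (\<Sum>(k,n)\<in>supp u. norm (u k n) * p (mono1 k n))"
  using sm_decomp_gen[OF sm, of "supp u"] u by (simp add: Aq_supp)

lemma sm_P:
  assumes sm: "submult_seminorm q p"
  shows "norm q powi (int i * b) * p (mono1 (i+j) (a+b)) \<le> p (mono1 i a) * p (mono1 j b)"
proof -
  have "p (aq_mult q (mono1 i a) (mono1 j b)) \<le> p (mono1 i a) * p (mono1 j b)"
    using sm Aq_mono1 unfolding submult_seminorm_def by blast
  moreover have "p (aq_mult q (mono1 i a) (mono1 j b)) = norm (q powi (int i * b)) * p (mono1 (i+j) (a+b))"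
    unfolding mult_mono1 using sm Aq_mono1 unfolding submult_seminorm_def by blast
  ultimately show ?thesis by (simp add: norm_power_int)
qed

lemma dominate:
  assumes sm: "submult_seminorm q p" and u: "u \<in> Aq"
    and b: "\<forall>k n. p (mono1 k n) \<le> C * w k n"
  shows "p u \<le> C * wn w u"
proof -
  have "p u \<le> (\<Sum>(k,n)\<in>supp u. norm (u k n) * p (mono1 k n))" by (rule sm_decomp[OF sm u])
  also have "\<dots> \<le> (\<Sum>(k,n)\<in>supp u. norm (u k n) * (C * w k n))"
    by (rule sum_mono) (use b in \<open>auto intro: mult_left_mono\<close>)
  also have "\<dots> = C * wn w u"
    unfolding wn_def by (simp add: sum_distrib_left case_prod_unfold algebra_simps)
  finally show ?thesis .
qed


theorem mainTheorem16:
  fixes q :: complex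
  assumes "q \<noteq> 0" and "norm q \<noteq> 1"
  shows "(norm q < 1 \<longrightarrow>
            (\<forall>D K. D \<ge> 1 \<and> D * norm q ^ K \<ge> 1 \<longrightarrow> submult_seminorm q (pDK_lt q D K)) \<and>
            (\<forall>p. submult_seminorm q p \<longrightarrow>
               (\<exists>D K C. D \<ge> 1 \<and> D * norm q ^ K \<ge> 1 \<and> (\<forall>u\<in>Aq. p u \<le> C * pDK_lt q D K u))))
       \<and> (norm q > 1 \<longrightarrow>
            (\<forall>D K. D \<ge> 1 \<and> D / norm q ^ K \<ge> 1 \<longrightarrow> submult_seminorm q (pDK_gt q D K)) \<and>
            (\<forall>p. submult_seminorm q p \<longrightarrow>
               (\<exists>D K C. D \<ge> 1 \<and> D / norm q ^ K \<ge> 1 \<and> (\<forall>u\<in>Aq. p u \<le> C * pDK_gt q D K u))))"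
proof -
  have nq: "0 < norm q" using assms by simp
  have lt_eq: "\<forall>u\<in>Aq. pDK_lt q D K u = wn (\<lambda>k n. if k \<le> K then (D * norm q ^ k) ^ nat \<bar>n\<bar> else 0) u" for D K
    unfolding pDK_lt_def using sum_lnorm_wn[where K=K and g="\<lambda>k. D * norm q ^ k"] by simp
  have gt_eq: "\<forall>u\<in>Aq. pDK_gt q D K u = wn (\<lambda>k n. if k \<le> K then (D / norm q ^ k) ^ nat \<bar>n\<bar> else 0) u" for D K
    unfolding pDK_gt_def using sum_lnorm_wn[where K=K and g="\<lambda>k. D / norm q ^ k"] by simp
  have part1: "norm q < 1 \<longrightarrow>
            (\<forall>D K. D \<ge> 1 \<and> D * norm q ^ K \<ge> 1 \<longrightarrow> submult_seminorm q (pDK_lt q D K)) \<and>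
            (\<forall>p. submult_seminorm q p \<longrightarrow>
               (\<exists>D K C. D \<ge> 1 \<and> D * norm q ^ K \<ge> 1 \<and> (\<forall>u\<in>Aq. p u \<le> C * pDK_lt q D K u)))"
  proof (intro impI conjI allI)
    assume q1: "norm q < 1"
    fix D K assume DK: "D \<ge> 1 \<and> D * norm q ^ K \<ge> 1"
    show "submult_seminorm q (pDK_lt q D K)"
    proof (rule wn_submult[OF _ _ lt_eq])
      show "\<forall>k n. 0 \<le> (if k \<le> K then (D * norm q ^ k) ^ nat \<bar>n\<bar> else 0)" using DK by auto
      show "\<forall>i a j b. norm (q powi (int i * b)) * (\<lambda>k n. if k \<le> K then (D * norm q ^ k) ^ nat \<bar>n\<bar> else 0) (i+j) (a+b)
          \<le> (\<lambda>k n. if k \<le> K then (D * norm q ^ k) ^ nat \<bar>n\<bar> else 0) i a * (\<lambda>k n. if k \<le> K then (D * norm q ^ k) ^ nat \<bar>n\<bar> else 0) j b"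
        using weight_lt[OF nq q1, of D K] DK by (simp add: norm_power_int)
    qed
  next
    assume q1: "norm q < 1"
    fix p assume sm: "submult_seminorm q p"
    obtain D K C where D: "D \<ge> 1" "D * norm q ^ K \<ge> 1"
      and b: "\<forall>k n. p (mono1 k n) \<le> C * (if k \<le> K then (D * norm q ^ k) ^ nat \<bar>n\<bar> else 0)"
      using conv_lt[OF nq q1, of "\<lambda>k n. p (mono1 k n)"] sm_nonneg[OF sm Aq_mono1] sm_P[OF sm] by blast
    show "\<exists>D K C. D \<ge> 1 \<and> D * norm q ^ K \<ge> 1 \<and> (\<forall>u\<in>Aq. p u \<le> C * pDK_lt q D K u)"
    proof (intro exI conjI ballI)
      fix u assume u: "u \<in> Aq"
      show "p u \<le> C * pDK_lt q D K u" using dominate[OF sm u b] lt_eq[of D K] u by simp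
    qed (use D in auto)
  qed
  have part2: "norm q > 1 \<longrightarrow>
            (\<forall>D K. D \<ge> 1 \<and> D / norm q ^ K \<ge> 1 \<longrightarrow> submult_seminorm q (pDK_gt q D K)) \<and>
            (\<forall>p. submult_seminorm q p \<longrightarrow>
               (\<exists>D K C. D \<ge> 1 \<and> D / norm q ^ K \<ge> 1 \<and> (\<forall>u\<in>Aq. p u \<le> C * pDK_gt q D K u)))"
  proof (intro impI conjI allI)
    assume q1: "norm q > 1"
    have x0: "0 < 1 / norm q" and x1: "1 / norm q < 1" using q1 by (auto simp: divide_less_eq)
    have pw: "(1 / norm q) ^ k = 1 / norm q ^ k" for k by (simp add: power_one_over)
    have pi: "(1 / norm q) powi (int i * b) = norm q powi (int i * - b)" for i b
      by (simp add: power_int_minus power_int_inverse divide_inverse)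
    {
      fix D K assume DK: "D \<ge> 1 \<and> D / norm q ^ K \<ge> 1"
      have DK': "1 \<le> D * (1 / norm q) ^ K" using DK by (simp add: pw)
      show "submult_seminorm q (pDK_gt q D K)"
      proof (rule wn_submult[OF _ _ gt_eq])
        show "\<forall>k n. 0 \<le> (if k \<le> K then (D / norm q ^ k) ^ nat \<bar>n\<bar> else 0)" using DK by auto
        show "\<forall>i a j b. norm (q powi (int i * b)) * (\<lambda>k n. if k \<le> K then (D / norm q ^ k) ^ nat \<bar>n\<bar> else 0) (i+j) (a+b)
            \<le> (\<lambda>k n. if k \<le> K then (D / norm q ^ k) ^ nat \<bar>n\<bar> else 0) i a * (\<lambda>k n. if k \<le> K then (D / norm q ^ k) ^ nat \<bar>n\<bar> else 0) j b"
        proof (intro allI)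
          fix i a j b
          have wl: "(1 / norm q) powi (int i * - b) * (\<lambda>k n. if k \<le> K then (D * (1 / norm q) ^ k) ^ nat \<bar>n\<bar> else 0) (i+j) (-a + - b)
            \<le> (\<lambda>k n. if k \<le> K then (D * (1 / norm q) ^ k) ^ nat \<bar>n\<bar> else 0) i (-a) * (\<lambda>k n. if k \<le> K then (D * (1 / norm q) ^ k) ^ nat \<bar>n\<bar> else 0) j (-b)"
            by (rule weight_lt[OF x0 x1]) (use DK DK' in auto)
          have pe: "(1 / norm q) powi (int i * - b) = norm q powi (int i * b)"
            using pi[of i "-b"] by simp
          show "norm (q powi (int i * b)) * (\<lambda>k n. if k \<le> K then (D / norm q ^ k) ^ nat \<bar>n\<bar> else 0) (i+j) (a+b)
            \<le> (\<lambda>k n. if k \<le> K then (D / norm q ^ k) ^ nat \<bar>n\<bar> else 0) i a * (\<lambda>k n. if k \<le> K then (D / norm q ^ k) ^ nat \<bar>n\<bar> else 0) j b"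
          proof -
            have ab: "\<bar>- a + - b\<bar> = \<bar>a + b\<bar>" "\<bar>- a\<bar> = \<bar>a\<bar>" "\<bar>- b\<bar> = \<bar>b\<bar>" by arith+
            have dd: "D * (1 / norm q) ^ k = D / norm q ^ k" for k by (simp add: pw)
            show ?thesis using wl pe DK unfolding ab dd by (simp add: norm_power_int abs_minus_cancel)
          qed
        qed
      qed
    }
    fix p assume sm: "submult_seminorm q p"
    have M': "(1 / norm q) powi (int i * b) * p (mono1 (i+j) (-(a+b))) \<le> p (mono1 i (-a)) * p (mono1 j (-b))" for i a j b
      using sm_P[OF sm, of i "-b" j "-a"] by (simp add: pi)
    obtain D K C where D: "D \<ge> 1" "D * (1 / norm q) ^ K \<ge> 1"
      and b: "\<forall>k n. p (mono1 k (-n)) \<le> C * (if k \<le> K then (D * (1 / norm q) ^ k) ^ nat \<bar>n\<bar> else 0)"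
      using conv_lt[OF x0 x1, of "\<lambda>k n. p (mono1 k (-n))"] sm_nonneg[OF sm Aq_mono1] M' by blast
    have b': "\<forall>k n. p (mono1 k n) \<le> C * (if k \<le> K then (D / norm q ^ k) ^ nat \<bar>n\<bar> else 0)"
    proof (intro allI)
      fix k n show "p (mono1 k n) \<le> C * (if k \<le> K then (D / norm q ^ k) ^ nat \<bar>n\<bar> else 0)"
      proof -
        have e: "\<bar>- n\<bar> = \<bar>n\<bar>" "D * (1 / norm q) ^ k = D / norm q ^ k" by (simp_all add: pw)
        show ?thesis using b[rule_format, of k "-n"] unfolding e by simp
      qed
    qed
    show "\<exists>D K C. D \<ge> 1 \<and> D / norm q ^ K \<ge> 1 \<and> (\<forall>u\<in>Aq. p u \<le> C * pDK_gt q D K u)"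
    proof (intro exI conjI ballI)
      fix u assume u: "u \<in> Aq"
      show "p u \<le> C * pDK_gt q D K u" using dominate[OF sm u b'] gt_eq[of D K] u by simp
    qed (use D in \<open>auto simp: pw\<close>)
  qed
  show ?thesis using part1 part2 by blast
qed

end
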